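(* For real numbers $y,z$ let $h_{y,z}(u):=uy+(1-u)z+2u\ln u+2(1-u)\ln(1-u)+1$ for $u\in(0,1)$, and let $U$ be uniform on $(0,1)$. Then for all real $t$ (with $t\neq 0$), $\left|\mathbf{E}e^{ith_{y,z}(U)}\right|\le 2|t|^{-1/2}$. *)

theory Defs
  imports "HOL-Probability.Probability"
begin

definition h_fun :: "real \<Rightarrow> real \<Rightarrow> real \<Rightarrow> real" where
  "h_fun y z u = u * y + (1 - u) * z + 2 * u * ln u + 2 * (1 - u) * ln (1 - u) + 1"

definition unif01 :: "real measure" where
  "unif01 = uniform_measure lborel {0<..<1}"

end

theory Submission
  imports Defs
begin


lemma unif_eq:
  fixes f :: "real \<Rightarrow> complex"
  assumes [measurable]: "f \<in> borel_measurable borel"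
  shows "(\<integral>u. f u \<partial>unif01) = (LINT u:{0<..<1}|lborel. f u)"
proof -
  have e: "unif01 = density lborel (\<lambda>x. ennreal (indicator {0<..<1} x))"
    unfolding unif01_def uniform_measure_def
    by (intro density_cong) (auto split: split_indicator)
  have "(\<integral>u. f u \<partial>unif01) = (\<integral>u. f u \<partial>(density lborel (\<lambda>x. ennreal (indicator {0<..<1} x))))"
    by (simp only: e)
  also have "\<dots> = (LINT u:{0<..<1}|lborel. f u)"
    by (subst integral_density) (auto simp: set_lebesgue_integral_def)
  finally show ?thesis .
qed

lemma meas: "(\<lambda>u. cis (t * h_fun y z u)) \<in> borel_measurable borel"
proof -
  have "(\<lambda>u. t * h_fun y z u) \<in> borel_measurable borel"
    unfolding h_fun_def by measurable
  moreover have "cis \<in> borel_measurable borel"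
    by (intro borel_measurable_continuous_onI continuous_intros)
  ultimately show ?thesis by (rule measurable_compose)
qed

lemma si: "set_integrable lborel {0<..<1::real} (\<lambda>u. cis (t * h_fun y z u))"
proof -
  have 1: "integrable lborel (indicator {0<..<1::real} :: real \<Rightarrow> real)"
    by (simp add: integrable_indicator_iff)
  have 2: "(\<lambda>x. indicator {0<..<1::real} x *\<^sub>R cis (t * h_fun y z x)) \<in> borel_measurable lborel"
    using meas[of t y z] by measurable
  have 3: "AE x in lborel. norm (indicator {0<..<1::real} x *\<^sub>R cis (t * h_fun y z x)) \<le> norm (indicator {0<..<1::real} x :: real)"
    by (auto split: split_indicator)
  show ?thesis unfolding set_integrable_def by (rule Bochner_Integration.integrable_bound[OF 1 2 3])
qed

lemma henstock: "(\<integral>u. cis (t * h_fun y z u) \<partial>unif01) = integral {0..1} (\<lambda>u. cis (t * h_fun y z u))"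
  and henstock_int: "(\<lambda>u. cis (t * h_fun y z u)) integrable_on {0..1}"
  using unif_eq[OF meas[of t y z]] set_borel_integral_eq_integral[OF si[of t y z]]
    integral_open_interval_real integrable_on_open_interval_real by metis+



lemma vdc1:
  fixes \<phi> g g' :: "real \<Rightarrow> real" and a b :: real
  assumes ab: "a \<le> b"
  and dphi: "\<And>u. u \<in> {a..b} \<Longrightarrow> (\<phi> has_real_derivative g u) (at u)"
  and dg: "\<And>u. u \<in> {a..b} \<Longrightarrow> (g has_real_derivative g' u) (at u)"
  and nz: "\<And>u. u \<in> {a..b} \<Longrightarrow> g u \<noteq> 0"
  and pos: "\<And>u. u \<in> {a..b} \<Longrightarrow> g' u \<ge> 0"
  shows "cmod (integral {a..b} (\<lambda>u. cis (\<phi> u))) \<le> 1/\<bar>g a\<bar> + 1/\<bar>g b\<bar> + (1/g a - 1/g b)"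
proof -
  define q where "q u = g' u * inverse (g u ^ Suc (Suc 0))" for u
  define F where "F u = cis (\<phi> u) * complex_of_real (inverse (g u)) * (- \<i>)" for u
  define R where "R u = \<i> * cis (\<phi> u) * complex_of_real (q u)" for u
  define F' where "F' u = cis (\<phi> u) + R u" for u
  have dc: "((\<lambda>u. cis (\<phi> u)) has_vector_derivative (complex_of_real (g u) * \<i> * cis (\<phi> u))) (at u within {a..b})"
    if u: "u \<in> {a..b}" for u
  proof -
    have "(\<phi> has_derivative (*) (g u)) (at u within {a..b})"
      using has_derivative_at_withinI[OF dphi[OF u, unfolded has_field_derivative_def]] .
    from has_derivative_cis[OF this] show ?thesis
      unfolding has_vector_derivative_def
      by (simp add: scaleR_conv_of_real algebra_simps)
  qed
  have dinv0: "((\<lambda>u. inverse (g u)) has_real_derivative (- q u)) (at u within {a..b})"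
    if u: "u \<in> {a..b}" for u
    unfolding q_def by (rule DERIV_inverse_fun[OF has_field_derivative_at_within[OF dg[OF u]] nz[OF u]])
  have dinv: "((\<lambda>u. complex_of_real (inverse (g u))) has_vector_derivative complex_of_real (- q u)) (at u within {a..b})"
    if u: "u \<in> {a..b}" for u
    using dinv0[OF u] by (rule has_vector_derivative_of_real)
  have dF: "(F has_vector_derivative F' u) (at u within {a..b})" if u: "u \<in> {a..b}" for u
  proof -
    note D = has_vector_derivative_mult_left[OF has_vector_derivative_mult[OF dc[OF u] dinv[OF u]], of "- \<i>"]
    moreover have "(cis (\<phi> u) * complex_of_real (- q u) + (complex_of_real (g u) * \<i> * cis (\<phi> u)) * complex_of_real (inverse (g u))) * (- \<i>) = F' u"
    proof -
      have 1: "complex_of_real (g u) * complex_of_real (inverse (g u)) = 1"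
        using nz[OF u] by (simp flip: of_real_mult)
      have "(cis (\<phi> u) * complex_of_real (- q u) + (complex_of_real (g u) * \<i> * cis (\<phi> u)) * complex_of_real (inverse (g u))) * (- \<i>)
         = \<i> * cis (\<phi> u) * complex_of_real (q u) + (\<i> * (- \<i>)) * cis (\<phi> u) * (complex_of_real (g u) * complex_of_real (inverse (g u)))"
        by (simp add: algebra_simps)
      also have "\<dots> = F' u" unfolding 1 F'_def R_def by simp
      finally show ?thesis .
    qed
    ultimately show ?thesis unfolding F_def by simp
  qed
  have IF': "(F' has_integral (F b - F a)) {a..b}"
    by (rule fundamental_theorem_of_calculus[OF ab dF])
  have dG: "((\<lambda>u. - inverse (g u)) has_vector_derivative q u) (at u within {a..b})"
    if u: "u \<in> {a..b}" for u
  proof -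
    have "((\<lambda>u. - inverse (g u)) has_real_derivative (- (- q u))) (at u within {a..b})"
      by (rule DERIV_minus[OF dinv0[OF u]])
    then show ?thesis by (simp add: has_real_derivative_iff_has_vector_derivative)
  qed
  have IG: "(q has_integral (1 / g a - 1 / g b)) {a..b}"
    using fundamental_theorem_of_calculus[OF ab dG] by (simp add: inverse_eq_divide)
  have contphi: "continuous_on {a..b} \<phi>"
    using dphi by (meson DERIV_continuous continuous_at_imp_continuous_on)
  have Icis: "(\<lambda>u. cis (\<phi> u)) integrable_on {a..b}"
    by (intro integrable_continuous_interval continuous_intros contphi)
  have IR: "R integrable_on {a..b}"
  proof -
    have "(\<lambda>u. F' u - cis (\<phi> u)) integrable_on {a..b}"
      using IF' Icis by (intro integrable_diff) auto
    then show ?thesis unfolding F'_def by simp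
  qed
  have eq: "integral {a..b} (\<lambda>u. cis (\<phi> u)) = (F b - F a) - integral {a..b} R"
  proof -
    have "integral {a..b} F' = integral {a..b} (\<lambda>u. cis (\<phi> u)) + integral {a..b} R"
      unfolding F'_def using Icis IR by (rule integral_add)
    moreover have "integral {a..b} F' = F b - F a" using IF' by (rule integral_unique)
    ultimately show ?thesis by (simp add: algebra_simps)
  qed
  have nR: "norm (integral {a..b} R) \<le> 1 / g a - 1 / g b"
  proof -
    have "norm (integral {a..b} R) \<le> integral {a..b} q"
    proof (rule integral_norm_bound_integral[OF IR])
      show "q integrable_on {a..b}" using IG by blast
      fix u assume u: "u \<in> {a..b}"
      have "q u \<ge> 0" unfolding q_def using pos[OF u] by simp
      then show "norm (R u) \<le> q u"
        unfolding R_def by (simp add: norm_mult)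
    qed
    also have "\<dots> = 1 / g a - 1 / g b" using IG by (rule integral_unique)
    finally show ?thesis .
  qed
  have nF: "norm (F u) = 1 / \<bar>g u\<bar>" for u
    unfolding F_def by (simp add: norm_mult norm_inverse flip: of_real_inverse) (simp add: inverse_eq_divide)
  have "cmod (integral {a..b} (\<lambda>u. cis (\<phi> u))) \<le> norm (F b) + norm (F a) + norm (integral {a..b} R)"
    unfolding eq by (meson norm_triangle_ineq4 norm_triangle_le_diff add_mono order_refl order_trans)
  then show ?thesis using nR nF[of a] nF[of b] by linarith
qed



lemma dh: assumes "0 < u" "u < 1"
  shows "((\<lambda>u. s * h_fun y z u) has_real_derivative (s * (y - z + 2 * ln u - 2 * ln (1 - u)))) (at u)"
proof -
  have e: "s*2 + s*(u*2)/(1-u) = s*2/(1-u)" using assms by (simp add: field_simps)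
  show ?thesis
  unfolding h_fun_def using assms
  by (auto intro!: derivative_eq_intros simp: algebra_simps e)
qed

lemma dg: assumes "0 < u" "u < 1"
  shows "((\<lambda>u. s * (y - z + 2 * ln u - 2 * ln (1 - u))) has_real_derivative (s * (2 / u + 2 / (1 - u)))) (at u)"
  using assms
  by (auto intro!: derivative_eq_intros simp: algebra_simps)

lemma g8: assumes "0 < u" "u < 1" shows "2 / u + 2 / (1 - u) \<ge> (8::real)"
proof -
  have "2 / u + 2 / (1 - u) = 2 / (u * (1 - u))" using assms by (simp add: field_simps)
  moreover have "u * (1 - u) \<le> 1/4" 
  proof -
    have "(2*u - 1)^2 \<ge> 0" by simp
    then show ?thesis by (simp add: power2_eq_square algebra_simps)
  qed
  moreover have "u * (1 - u) > 0" using assms by simp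
  ultimately show ?thesis by (simp add: field_simps)
qed



lemma norm5: "norm (a+b+c+d+(e::'a::real_normed_vector)) \<le> norm a + norm b + norm c + norm d + norm e"
proof -
  have "norm (a+b+c+d+e) \<le> norm (a+b+c+d) + norm e" by (rule norm_triangle_ineq)
  moreover have "norm (a+b+c+d) \<le> norm (a+b+c) + norm d" by (rule norm_triangle_ineq)
  moreover have "norm (a+b+c) \<le> norm (a+b) + norm c" by (rule norm_triangle_ineq)
  moreover have "norm (a+b) \<le> norm a + norm b" by (rule norm_triangle_ineq)
  ultimately show ?thesis by linarith
qed

lemma main_pos:
  fixes s y z :: real assumes s: "s > 0"
  shows "cmod (integral {0..1} (\<lambda>u. cis (s * h_fun y z u))) \<le> 2 / sqrt s"
proof -
  define \<phi> where "\<phi> = (\<lambda>u. s * h_fun y z u)"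
  define g where "g = (\<lambda>u. s * (y - z + 2 * ln u - 2 * ln (1 - u)))"
  define g' where "g' = (\<lambda>u::real. s * (2 / u + 2 / (1 - u)))"
  define \<delta> where "\<delta> = 4 * sqrt s"
  define f where "f = (\<lambda>u. cis (\<phi> u))"
  define I where "I = integral {0..1} f"
  have sq: "sqrt s * sqrt s = s" using s by simp
  have sqp: "sqrt s > 0" using s by simp
  have dpos: "\<delta> > 0" unfolding \<delta>_def using sqp by simp
  have dphi: "(\<phi> has_real_derivative g u) (at u)" if "0 < u" "u < 1" for u
    unfolding \<phi>_def g_def using that by (rule dh)
  have dgg: "(g has_real_derivative g' u) (at u)" if "0 < u" "u < 1" for u
    unfolding g'_def g_def using that by (rule dg)
  have gmono: "g u \<le> g v" if "0 < u" "u \<le> v" "v < 1" for u v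
  proof -
    have "ln u \<le> ln v" using that by simp
    moreover have "ln (1 - v) \<le> ln (1 - u)" using that by simp
    ultimately have "y - z + 2 * ln u - 2 * ln (1 - u) \<le> y - z + 2 * ln v - 2 * ln (1 - v)" by linarith
    then show ?thesis unfolding g_def using s by (simp add: mult_left_mono)
  qed
  have g'pos: "g' u \<ge> 8 * s" if "0 < u" "u < 1" for u
    unfolding g'_def using g8[OF that] s by simp
  have int01: "f integrable_on {0..1}" unfolding f_def \<phi>_def by (rule henstock_int)
  have key: "cmod I \<le> 2 / sqrt s + e" if e: "e > 0" for e
  proof -
    define K where "K = \<delta> / s + \<bar>y - z\<bar> + 2 * ln 2 + 1"
    define \<epsilon> where "\<epsilon> = min (min (e/2) (1/4)) (exp (-K))"
    have \<epsilon>0: "0 < \<epsilon>" "\<epsilon> \<le> 1/4" "2 * \<epsilon> \<le> e" "\<epsilon> \<le> exp (-K)"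
      unfolding \<epsilon>_def using e by auto
    have ln\<epsilon>: "ln \<epsilon> \<le> -K"
      using \<epsilon>0 by (metis exp_gt_zero ln_exp ln_le_cancel_iff)
    have l1: "ln (1 - \<epsilon>) \<le> 0" using \<epsilon>0 by simp
    have l2: "ln (1 - \<epsilon>) \<ge> - ln 2"
    proof -
      have "ln (1/2) \<le> ln (1 - \<epsilon>)" using \<epsilon>0 by simp
      moreover have "ln (1/2::real) = - ln 2" by (simp add: ln_div)
      ultimately show ?thesis by simp
    qed
    have ds: "\<delta> / s > 0" using dpos s by simp
    have ln2: "ln (2::real) > 0" by simp
    have "y - z + 2 * ln \<epsilon> - 2 * ln (1 - \<epsilon>) < - (\<delta> / s)"
      using ln\<epsilon> l2 ds ln2 abs_ge_self[of "y - z"] unfolding K_def by linarith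
    then have "s * (y - z + 2 * ln \<epsilon> - 2 * ln (1 - \<epsilon>)) < s * (- (\<delta> / s))"
      using s by (rule mult_strict_left_mono)
    then have g\<epsilon>: "g \<epsilon> < - \<delta>" unfolding g_def using s by simp
    have "y - z + 2 * ln (1 - \<epsilon>) - 2 * ln \<epsilon> > \<delta> / s"
      using ln\<epsilon> l2 ds ln2 abs_ge_minus_self[of "y - z"] unfolding K_def by linarith
    then have "s * (\<delta> / s) < s * (y - z + 2 * ln (1 - \<epsilon>) - 2 * ln \<epsilon>)"
      using s by (rule mult_strict_left_mono)
    then have g1\<epsilon>: "g (1 - \<epsilon>) > \<delta>" unfolding g_def using s by simp
    have cont: "isCont g u" if "\<epsilon> \<le> u" "u \<le> 1 - \<epsilon>" for u
      using dgg[of u] that \<epsilon>0 by (intro DERIV_isCont) auto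
    have "\<exists>x. \<epsilon> \<le> x \<and> x \<le> 1 - \<epsilon> \<and> g x = - \<delta>"
      by (rule IVT) (use g\<epsilon> g1\<epsilon> dpos \<epsilon>0 cont in auto)
    then obtain a1 where a1: "\<epsilon> \<le> a1" "a1 \<le> 1 - \<epsilon>" "g a1 = - \<delta>" by blast
    have "\<exists>x. \<epsilon> \<le> x \<and> x \<le> 1 - \<epsilon> \<and> g x = \<delta>"
      by (rule IVT) (use g\<epsilon> g1\<epsilon> dpos \<epsilon>0 cont in auto)
    then obtain b1 where b1: "\<epsilon> \<le> b1" "b1 \<le> 1 - \<epsilon>" "g b1 = \<delta>" by blast
    have ab: "a1 \<le> b1"
    proof (rule ccontr)
      assume "\<not> a1 \<le> b1"
      then have "g b1 \<le> g a1" using gmono[of b1 a1] a1 b1 \<epsilon>0 by auto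
      then show False using a1 b1 dpos by simp
    qed
    have sub: "f integrable_on {c..d}" if "0 \<le> c" "d \<le> 1" for c d
    proof (cases "c \<le> d")
      case True
      then show ?thesis using integrable_subinterval_real[OF int01, of c d] that by auto
    next
      case False
      then show ?thesis by (simp add: integrable_on_empty)
    qed
    have split: "I = integral {0..\<epsilon>} f + integral {\<epsilon>..a1} f + integral {a1..b1} f
        + integral {b1..1-\<epsilon>} f + integral {1-\<epsilon>..1} f"
    proof -
      have "integral {0..\<epsilon>} f + integral {\<epsilon>..1} f = I"
        unfolding I_def using \<epsilon>0 int01 by (intro Henstock_Kurzweil_Integration.integral_combine) auto
      moreover have "integral {\<epsilon>..a1} f + integral {a1..1} f = integral {\<epsilon>..1} f"
        using \<epsilon>0 a1 sub by (intro Henstock_Kurzweil_Integration.integral_combine) auto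
      moreover have "integral {a1..b1} f + integral {b1..1} f = integral {a1..1} f"
        using \<epsilon>0 a1 b1 ab sub by (intro Henstock_Kurzweil_Integration.integral_combine) auto
      moreover have "integral {b1..1-\<epsilon>} f + integral {1-\<epsilon>..1} f = integral {b1..1} f"
        using \<epsilon>0 b1 sub by (intro Henstock_Kurzweil_Integration.integral_combine) auto
      ultimately show ?thesis by (simp add: algebra_simps)
    qed
    have edge: "norm (integral {c..d} f) \<le> d - c" if "0 \<le> c" "c \<le> d" "d \<le> 1" for c d
    proof -
      have "norm (integral {c..d} f) \<le> integral {c..d} (\<lambda>_. 1::real)"
        by (rule integral_norm_bound_integral) (use sub that in \<open>auto simp: f_def\<close>)
      then show ?thesis using that by simp
    qed
    have B0: "norm (integral {0..\<epsilon>} f) \<le> \<epsilon>" using edge[of 0 \<epsilon>] \<epsilon>0 by simp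
    have B4: "norm (integral {1-\<epsilon>..1} f) \<le> \<epsilon>" using edge[of "1-\<epsilon>" 1] \<epsilon>0 by simp
    have B1: "norm (integral {\<epsilon>..a1} f) \<le> 2 / \<delta>"
    proof -
      have "norm (integral {\<epsilon>..a1} f) \<le> 1/\<bar>g \<epsilon>\<bar> + 1/\<bar>g a1\<bar> + (1/g \<epsilon> - 1/g a1)"
        unfolding f_def
      proof (rule vdc1[where g' = g'])
        show "\<epsilon> \<le> a1" by fact
        fix u assume u: "u \<in> {\<epsilon>..a1}"
        then have u01: "0 < u" "u < 1" using \<epsilon>0 a1 by auto
        show "(\<phi> has_real_derivative g u) (at u)" by (rule dphi[OF u01])
        show "(g has_real_derivative g' u) (at u)" by (rule dgg[OF u01])
        show "g' u \<ge> 0" using g'pos[OF u01] s by linarith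
        have "g u \<le> g a1" using gmono[of u a1] u u01 a1 \<epsilon>0 by auto
        then show "g u \<noteq> 0" using a1 dpos by auto
      qed
      also have "\<dots> = 2 / \<delta>" using g\<epsilon> a1 dpos by simp
      finally show ?thesis .
    qed
    have B3: "norm (integral {b1..1-\<epsilon>} f) \<le> 2 / \<delta>"
    proof -
      have "norm (integral {b1..1-\<epsilon>} f) \<le> 1/\<bar>g b1\<bar> + 1/\<bar>g (1-\<epsilon>)\<bar> + (1/g b1 - 1/g (1-\<epsilon>))"
        unfolding f_def
      proof (rule vdc1[where g' = g'])
        show "b1 \<le> 1 - \<epsilon>" by fact
        fix u assume u: "u \<in> {b1..1-\<epsilon>}"
        then have u01: "0 < u" "u < 1" using \<epsilon>0 b1 by auto
        show "(\<phi> has_real_derivative g u) (at u)" by (rule dphi[OF u01])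
        show "(g has_real_derivative g' u) (at u)" by (rule dgg[OF u01])
        show "g' u \<ge> 0" using g'pos[OF u01] s by linarith
        have "g b1 \<le> g u" using gmono[of b1 u] u u01 b1 \<epsilon>0 by auto
        then show "g u \<noteq> 0" using b1 dpos by auto
      qed
      also have "\<dots> = 2 / \<delta>" using g1\<epsilon> b1 dpos by simp
      finally show ?thesis .
    qed
    have len: "b1 - a1 \<le> 1 / sqrt s"
    proof (cases "a1 = b1")
      case True then show ?thesis using sqp by simp
    next
      case False
      then have lt: "a1 < b1" using ab by simp
      have "\<exists>\<xi>. a1 < \<xi> \<and> \<xi> < b1 \<and> g b1 - g a1 = (b1 - a1) * g' \<xi>"
        by (rule MVT2[OF lt]) (use a1 b1 \<epsilon>0 in \<open>auto intro!: dgg\<close>)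
      then obtain \<xi> where \<xi>: "a1 < \<xi>" "\<xi> < b1" "g b1 - g a1 = (b1 - a1) * g' \<xi>" by blast
      have "g' \<xi> \<ge> 8 * s" using g'pos[of \<xi>] \<xi> a1 b1 \<epsilon>0 by simp
      then have "(b1 - a1) * (8 * s) \<le> (b1 - a1) * g' \<xi>" using lt by (intro mult_left_mono) auto
      also have "\<dots> = 2 * \<delta>" using \<xi> a1 b1 by simp
      finally have "(b1 - a1) * (8 * s) \<le> 8 * sqrt s" unfolding \<delta>_def by simp
      then have "b1 - a1 \<le> sqrt s / s" using s by (simp add: field_simps)
      also have "sqrt s / s = 1 / sqrt s" using sqp by (simp add: field_simps sq)
      finally show ?thesis .
    qed
    have B2: "norm (integral {a1..b1} f) \<le> b1 - a1"
    proof -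
      have "continuous_on {a1..b1} \<phi>"
        using a1 b1 \<epsilon>0 by (intro continuous_at_imp_continuous_on) (auto intro!: DERIV_isCont dphi)
      then have "continuous_on {a1..b1} f" unfolding f_def by (intro continuous_intros)
      then have "norm (integral {a1..b1} f) \<le> 1 * (b1 - a1)"
        using ab by (intro integral_bound) (auto simp: f_def)
      then show ?thesis by simp
    qed
    have "cmod I \<le> \<epsilon> + 2 / \<delta> + (b1 - a1) + 2 / \<delta> + \<epsilon>"
      unfolding split using B0 B1 B2 B3 B4 norm5 by (smt (verit))
    also have "\<dots> \<le> e + 4 / \<delta> + 1 / sqrt s" using \<epsilon>0 len by simp
    also have "4 / \<delta> = 1 / sqrt s" unfolding \<delta>_def using sqp by simp
    finally show ?thesis by simp
  qed
  show ?thesis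
    unfolding I_def[symmetric, unfolded f_def \<phi>_def] 
    by (rule field_le_epsilon) (rule key)
qed


theorem lemma2p3:
  fixes y z t :: real
  assumes "t \<noteq> 0"
  shows "cmod (\<integral>u. cis (t * h_fun y z u) \<partial>unif01) \<le> 2 * \<bar>t\<bar> powr (-1/2)"
proof -
  have p: "\<bar>t\<bar> powr (-1/2) = 1 / sqrt \<bar>t\<bar>"
  proof -
    have "(-1/2::real) = - (1/2)" by simp
    then show ?thesis by (simp only: powr_minus_divide) (simp add: powr_half_sqrt)
  qed
  have "cmod (integral {0..1} (\<lambda>u. cis (t * h_fun y z u))) \<le> 2 / sqrt \<bar>t\<bar>"
  proof (cases "t > 0")
    case True
    then show ?thesis using main_pos[of t y z] by simp
  next
    case False
    then have tn: "- t > 0" using assms by simp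
    have "integral {0..1} (\<lambda>u. cis (t * h_fun y z u)) = cnj (integral {0..1} (\<lambda>u. cis (- t * h_fun y z u)))"
      by (simp add: integral_cnj cis_cnj)
    then have "cmod (integral {0..1} (\<lambda>u. cis (t * h_fun y z u))) = cmod (integral {0..1} (\<lambda>u. cis (- t * h_fun y z u)))"
      by simp
    also have "\<dots> \<le> 2 / sqrt (- t)" by (rule main_pos[OF tn])
    finally show ?thesis using False by simp
  qed
  then show ?thesis unfolding henstock p by simp
qed

end
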